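(* Fix $(\boldsymbol l,\boldsymbol m)\in\mathcal Z_{kn}$. For generic $\bar\alpha=(\alpha_1,\dots,\alpha_n)$ and $\bar z=(z_1,\dots,z_k)$, the common eigenspaces of the operators $$\mathcal H_a=\sum_{i=1}^n\alpha_i\,\xi_{ai}\partial_{ai}+\sum_{b\ne a}\frac{1}{z_a-z_b}\sum_{i,j=1}^n\xi_{ai}\partial_{aj}\,\xi_{bj}\partial_{bi},\qquad a=1,\dots,k,$$ restricted to $\mathfrak P_{kn}[\boldsymbol l,\boldsymbol m]$ are one-dimensional. Similarly, for generic $\bar\alpha,\bar z$, the common eigenspaces of the operators $$\mathcal H'_i=\sum_{a=1}^k z_a\,\xi_{ai}\partial_{ai}+\sum_{j\ne i}\frac{1}{\alpha_j-\alpha_i}\sum_{a,b=1}^k\xi_{ai}\partial_{bi}\,\xi_{bj}\partial_{aj},\qquad i=1,\dots,n,$$ restricted to $\mathfrak P_{kn}[\boldsymbol l,\boldsymbol m]$ are one-dimensional.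
   Context: $\mathfrak P_{kn}$ is the space of polynomials in pairwise anticommuting variables $\xi_{ai}$ ($a\le k$, $i\le n$); the left derivation $\partial_{ai}$ sends a monomial $\xi_{c_1}\cdots\xi_{c_l}$ to $(-1)^{s-1}$ times the monomial with the $s$-th factor removed if $c_s=(a,i)$, and to $0$ otherwise. $\mathcal Z_{kn}$ is the set of $(\boldsymbol l,\boldsymbol m)\in\mathbb Z_{\ge0}^k\times\mathbb Z_{\ge0}^n$ with $l_a\le n$, $m_i\le k$, $\sum l_a=\sum m_i$; $\mathfrak P_{kn}[\boldsymbol l,\boldsymbol m]$ is spanned by the monomials $\prod\xi_{ai}^{d_{ai}}$, $d_{ai}\in\{0,1\}$, with $\sum_ad_{ai}=m_i$, $\sum_id_{ai}=l_a$. The operators $\mathcal H_a$ and $\mathcal H'_i$ are the images of the Gaudin Hamiltonians $H^{\langle n,k\rangle}_a(\bar\alpha,\bar z)=\sum_i\alpha_i(e_{ii})_{(a)}+\sum_{b\ne a}\Omega_{(ab)}/(z_a-z_b)\in U(\mathfrak{gl}_n)^{\otimes k}$ and $H^{\langle k,n\rangle}_i(\bar z,-\bar\alpha)\in U(\mathfrak{gl}_k)^{\otimes n}$ under $(e^{\langle n\rangle}_{ij})_{(a)}\mapsto\xi_{ai}\partial_{aj}$ and $(e^{\langle k\rangle}_{ab})_{(i)}\mapsto\xi_{ai}\partial_{bi}$ respectively; the $\alpha_i$ are pairwise distinct and the $z_a$ pairwise distinct. *)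

theory Defs
  imports Main Complex_Main
begin

text \<open>Elements of the Grassmann algebra P_kn are represented by their coefficient
functions: a monomial is a finite set of index pairs (a,i) (0-based, a<k, i<n),
standing for the product of the corresponding xi's in increasing lexicographic order.\<close>

type_synonym grass = "(nat \<times> nat) set \<Rightarrow> complex"

definition lexless :: "nat \<times> nat \<Rightarrow> nat \<times> nat \<Rightarrow> bool" where
  "lexless x y \<longleftrightarrow> fst x < fst y \<or> (fst x = fst y \<and> snd x < snd y)"

text \<open>Left derivation partial_d: removes xi_d from a monomial with sign (-1)^(s-1),
s the position of xi_d.\<close>
definition dop :: "nat \<times> nat \<Rightarrow> grass \<Rightarrow> grass" where
  "dop d f = (\<lambda>T. if d \<notin> T
      then (-1) ^ card {x \<in> T. lexless x d} * f (insert d T) else 0)"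

definition xop :: "nat \<times> nat \<Rightarrow> grass \<Rightarrow> grass" where
  "xop c f = (\<lambda>T. if c \<in> T
      then (-1) ^ card {x \<in> T. lexless x c} * f (T - {c}) else 0)"

definition E :: "nat \<Rightarrow> nat \<Rightarrow> nat \<Rightarrow> nat \<Rightarrow> grass \<Rightarrow> grass" where
  "E a i b j f = xop (a, i) (dop (b, j) f)"

definition Pweight :: "nat \<Rightarrow> nat \<Rightarrow> (nat \<Rightarrow> nat) \<Rightarrow> (nat \<Rightarrow> nat) \<Rightarrow> grass set" where
  "Pweight k n l m = {f. \<forall>S. f S \<noteq> 0 \<longrightarrow>
      S \<subseteq> {..<k} \<times> {..<n} \<and>
      (\<forall>a<k. card {i. (a, i) \<in> S} = l a) \<and>
      (\<forall>i<n. card {a. (a, i) \<in> S} = m i)}"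

definition Zkn :: "nat \<Rightarrow> nat \<Rightarrow> (nat \<Rightarrow> nat) \<Rightarrow> (nat \<Rightarrow> nat) \<Rightarrow> bool" where
  "Zkn k n l m \<longleftrightarrow> (\<forall>a<k. l a \<le> n) \<and> (\<forall>i<n. m i \<le> k) \<and>
      (\<Sum>a<k. l a) = (\<Sum>i<n. m i)"

definition Hop :: "nat \<Rightarrow> nat \<Rightarrow> (nat \<Rightarrow> complex) \<Rightarrow> (nat \<Rightarrow> complex) \<Rightarrow> nat \<Rightarrow> grass \<Rightarrow> grass" where
  "Hop k n \<alpha> z a f = (\<lambda>T.
      (\<Sum>i<n. \<alpha> i * E a i a i f T)
    + (\<Sum>b\<in>{..<k} - {a}. (1 / (z a - z b)) *
         (\<Sum>i<n. \<Sum>j<n. E a i a j (E b j b i f) T)))"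

definition Hop' :: "nat \<Rightarrow> nat \<Rightarrow> (nat \<Rightarrow> complex) \<Rightarrow> (nat \<Rightarrow> complex) \<Rightarrow> nat \<Rightarrow> grass \<Rightarrow> grass" where
  "Hop' k n \<alpha> z i f = (\<lambda>T.
      (\<Sum>a<k. z a * E a i a i f T)
    + (\<Sum>j\<in>{..<n} - {i}. (1 / (\<alpha> j - \<alpha> i)) *
         (\<Sum>a<k. \<Sum>b<k. E a i b i (E b j a j f) T)))"

definition common_eigenspaces_one_dim :: "nat set \<Rightarrow> (nat \<Rightarrow> grass \<Rightarrow> grass) \<Rightarrow> grass set \<Rightarrow> bool" where
  "common_eigenspaces_one_dim I H V \<longleftrightarrow>
     (\<forall>\<mu> :: nat \<Rightarrow> complex.
        let Eig = {v \<in> V. \<forall>a\<in>I. H a v = (\<lambda>T. \<mu> a * v T)} in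
        Eig \<noteq> {\<lambda>T. 0} \<longrightarrow> (\<exists>v. v \<noteq> (\<lambda>T. 0) \<and> Eig = {(\<lambda>T. c * v T) | c. True}))"

inductive polyfun :: "nat \<Rightarrow> nat \<Rightarrow> ((nat \<Rightarrow> complex) \<Rightarrow> (nat \<Rightarrow> complex) \<Rightarrow> complex) \<Rightarrow> bool"
  for n k where
  const: "polyfun n k (\<lambda>\<alpha> z. c)"
| avar: "i < n \<Longrightarrow> polyfun n k (\<lambda>\<alpha> z. \<alpha> i)"
| zvar: "a < k \<Longrightarrow> polyfun n k (\<lambda>\<alpha> z. z a)"
| add: "polyfun n k p \<Longrightarrow> polyfun n k q \<Longrightarrow> polyfun n k (\<lambda>\<alpha> z. p \<alpha> z + q \<alpha> z)"
| mult: "polyfun n k p \<Longrightarrow> polyfun n k q \<Longrightarrow> polyfun n k (\<lambda>\<alpha> z. p \<alpha> z * q \<alpha> z)"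

definition generic :: "nat \<Rightarrow> nat \<Rightarrow> ((nat \<Rightarrow> complex) \<Rightarrow> (nat \<Rightarrow> complex) \<Rightarrow> bool) \<Rightarrow> bool" where
  "generic n k Q \<longleftrightarrow> (\<exists>P. polyfun n k P \<and> (\<exists>\<alpha> z. P \<alpha> z \<noteq> 0) \<and>
      (\<forall>\<alpha> z. inj_on \<alpha> {..<n} \<longrightarrow> inj_on z {..<k} \<longrightarrow> P \<alpha> z \<noteq> 0 \<longrightarrow> Q \<alpha> z))"

end

theory Submission
  imports Defs "Jordan_Normal_Form.Determinant"
begin

definition dt :: "nat \<Rightarrow> (nat \<Rightarrow> nat \<Rightarrow> complex) \<Rightarrow> complex" where
  "dt N f = det (mat N N (\<lambda>(i,j). f i j))"

lemma dt_formula: "dt N f = (\<Sum>p\<in>{p. p permutes {0..<N}}. signof p * (\<Prod>i=0..<N. f i (p i)))"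
  unfolding dt_def
  apply (subst det_def'[where n=N], simp)
  apply (rule sum.cong, simp)
  apply (rule arg_cong[where f="\<lambda>x. _ * x"])
  apply (rule prod.cong, simp)
  using permutes_in_image by fastforce

lemma dt_zero_iff: "dt N f = 0 \<longleftrightarrow> (\<exists>w. (\<exists>j<N. w j \<noteq> 0) \<and> (\<forall>i<N. (\<Sum>j<N. f i j * w j) = 0))"
proof -
  have A: "mat N N (\<lambda>(i,j). f i j) \<in> carrier_mat N N" by simp
  have mv: "(mat N N (\<lambda>(i,j). f i j) *\<^sub>v vec N w) $ i = (\<Sum>j<N. f i j * w j)" if "i < N" for w i
    using that by (simp add: scalar_prod_def row_def lessThan_atLeast0)
  show ?thesis
  proof
    assume "dt N f = 0"
    then obtain v where v: "v \<in> carrier_vec N" "v \<noteq> 0\<^sub>v N" "mat N N (\<lambda>(i,j). f i j) *\<^sub>v v = 0\<^sub>v N"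
      using det_0_iff_vec_prod_zero_field[OF A] unfolding dt_def by blast
    have vv: "v = vec N (\<lambda>j. v $ j)" using v(1) by auto
    have "\<exists>j<N. v $ j \<noteq> 0" using v(1,2) by (metis eq_vecI carrier_vecD index_zero_vec)
    moreover have "\<forall>i<N. (\<Sum>j<N. f i j * v $ j) = 0"
      using v(3) mv[of _ "\<lambda>j. v $ j"] vv by (metis index_zero_vec(1))
    ultimately show "\<exists>w. (\<exists>j<N. w j \<noteq> 0) \<and> (\<forall>i<N. (\<Sum>j<N. f i j * w j) = 0)" by blast
  next
    assume "\<exists>w. (\<exists>j<N. w j \<noteq> 0) \<and> (\<forall>i<N. (\<Sum>j<N. f i j * w j) = 0)"
    then obtain w where w: "\<exists>j<N. w j \<noteq> 0" "\<forall>i<N. (\<Sum>j<N. f i j * w j) = 0" by blast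
    have "vec N w \<noteq> 0\<^sub>v N" using w(1) by (metis index_vec index_zero_vec(1))
    moreover have "mat N N (\<lambda>(i,j). f i j) *\<^sub>v vec N w = 0\<^sub>v N"
      using w(2) mv by (intro eq_vecI) auto
    ultimately show "dt N f = 0" unfolding dt_def
      using det_0_iff_vec_prod_zero_field[OF A] by (meson vec_carrier)
  qed
qed

lemma dt_transpose: "dt N (\<lambda>i j. f j i) = dt N f"
proof -
  have "transpose_mat (mat N N (\<lambda>(i,j). f i j)) = mat N N (\<lambda>(i,j). f j i)"
    by (intro eq_matI) auto
  thus ?thesis unfolding dt_def using det_transpose[of "mat N N (\<lambda>(i,j). f i j)" N] by simp
qed

lemma dt_rowscale: "dt N (\<lambda>i j. g i * f i j) = (\<Prod>i=0..<N. g i) * dt N f"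
  unfolding dt_formula by (simp add: prod.distrib sum_distrib_left mult_ac)

fun mpow :: "nat \<Rightarrow> (nat \<Rightarrow> nat \<Rightarrow> complex) \<Rightarrow> nat \<Rightarrow> nat \<Rightarrow> nat \<Rightarrow> complex" where
  "mpow N A 0 = (\<lambda>t s. if t = s then 1 else 0)"
| "mpow N A (Suc j) = (\<lambda>t s. \<Sum>r<N. mpow N A j t r * A r s)"

definition kry :: "nat \<Rightarrow> (nat \<Rightarrow> nat \<Rightarrow> complex) \<Rightarrow> nat \<Rightarrow> nat \<Rightarrow> complex" where
  "kry N A = (\<lambda>j s. \<Sum>t<N. mpow N A j t s)"

lemma mpow_eig:
  assumes "\<forall>t<N. (\<Sum>s<N. A t s * v s) = lam * v t" "t < N"
  shows "(\<Sum>s<N. mpow N A j t s * v s) = lam^j * v t"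
  using assms(2)
proof (induction j arbitrary: t)
  case 0
  have "(\<Sum>s<N. (if t = s then 1 else 0) * v s) = (\<Sum>s<N. if t = s then v s else 0)"
    by (rule sum.cong) auto
  then show ?case using 0 by simp
next
  case (Suc j)
  have "(\<Sum>s<N. mpow N A (Suc j) t s * v s) = (\<Sum>s<N. \<Sum>r<N. mpow N A j t r * A r s * v s)"
    by (simp add: sum_distrib_right)
  also have "\<dots> = (\<Sum>r<N. mpow N A j t r * (\<Sum>s<N. A r s * v s))"
    by (subst sum.swap) (simp add: sum_distrib_left mult_ac)
  also have "\<dots> = (\<Sum>r<N. mpow N A j t r * (lam * v r))"
    using assms(1) by simp
  also have "\<dots> = lam * (\<Sum>r<N. mpow N A j t r * v r)"
    by (simp add: sum_distrib_left mult_ac)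
  also have "\<dots> = lam^Suc j * v t" using Suc by simp
  finally show ?case .
qed

lemma kry_eig:
  assumes "\<forall>t<N. (\<Sum>s<N. A t s * v s) = lam * v t"
  shows "(\<Sum>s<N. kry N A j s * v s) = lam^j * (\<Sum>t<N. v t)"
proof -
  have "(\<Sum>s<N. kry N A j s * v s) = (\<Sum>t<N. \<Sum>s<N. mpow N A j t s * v s)"
    unfolding kry_def by (subst sum.swap) (simp add: sum_distrib_right)
  also have "\<dots> = (\<Sum>t<N. lam^j * v t)" using mpow_eig[OF assms] by simp
  finally show ?thesis by (simp add: sum_distrib_left)
qed

lemma kry_one_dim:
  assumes d: "dt N (kry N A) \<noteq> 0"
    and e1: "\<forall>t<N. (\<Sum>s<N. A t s * v s) = lam * v t"
    and e2: "\<forall>t<N. (\<Sum>s<N. A t s * w s) = lam * w t"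
    and nz: "\<exists>t<N. v t \<noteq> 0"
  shows "\<exists>c. \<forall>t<N. w t = c * v t"
proof -
  define U where "U x = (\<Sum>t<N. x t)" for x :: "nat \<Rightarrow> complex"
  have kz: "\<forall>j<N. x j = 0" if "\<forall>j<N. (\<Sum>s<N. kry N A j s * x s) = 0" for x
    using d dt_zero_iff[of N "kry N A"] that by blast
  show ?thesis
  proof (cases "U v = 0")
    case True
    have "\<forall>j<N. (\<Sum>s<N. kry N A j s * v s) = 0"
      using kry_eig[OF e1] True unfolding U_def by simp
    then show ?thesis using kz nz by blast
  next
    case False
    define x where "x s = U v * w s - U w * v s" for s
    have e3: "\<forall>t<N. (\<Sum>s<N. A t s * x s) = lam * x t"
      using e1 e2 unfolding x_def
      by (simp add: right_diff_distrib sum_subtractf sum_distrib_left[symmetric] mult.left_commute)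
    have "\<forall>j<N. (\<Sum>s<N. kry N A j s * x s) = 0"
      using kry_eig[OF e3] unfolding x_def U_def
      by (simp add: sum_subtractf sum_distrib_left[symmetric])
    then have "\<forall>j<N. x j = 0" by (rule kz)
    then have "\<forall>t<N. w t = (U w / U v) * v t"
      using False unfolding x_def by (auto simp: field_simps)
    then show ?thesis by blast
  qed
qed

definition ispoly :: "(complex \<Rightarrow> complex) \<Rightarrow> bool" where
  "ispoly f \<longleftrightarrow> (\<exists>q. \<forall>x. f x = poly q x)"

lemma ispoly_const: "ispoly (\<lambda>s. c)"
  unfolding ispoly_def by (rule exI[of _ "[:c:]"]) simp

lemma ispoly_id: "ispoly (\<lambda>s. s)"
  unfolding ispoly_def by (rule exI[of _ "[:0,1:]"]) simp

lemma ispoly_add: "ispoly f \<Longrightarrow> ispoly g \<Longrightarrow> ispoly (\<lambda>s. f s + g s)"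
  unfolding ispoly_def by (metis poly_add)

lemma ispoly_mult: "ispoly f \<Longrightarrow> ispoly g \<Longrightarrow> ispoly (\<lambda>s. f s * g s)"
  unfolding ispoly_def by (metis poly_mult)

lemma ispoly_sum: "finite A \<Longrightarrow> (\<forall>x\<in>A. ispoly (f x)) \<Longrightarrow> ispoly (\<lambda>s. \<Sum>x\<in>A. f x s)"
  by (induction A rule: finite_induct) (auto intro: ispoly_const ispoly_add)

lemma ispoly_prod: "finite A \<Longrightarrow> (\<forall>x\<in>A. ispoly (f x)) \<Longrightarrow> ispoly (\<lambda>s. \<Prod>x\<in>A. f x s)"
  by (induction A rule: finite_induct) (auto intro: ispoly_const ispoly_mult)

lemma ispoly_mpow: "(\<forall>t u. ispoly (\<lambda>s. A s t u)) \<Longrightarrow> ispoly (\<lambda>s. mpow N (A s) j t u)"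
proof (induction j arbitrary: t u)
  case 0
  then show ?case by (simp add: ispoly_const)
next
  case (Suc j)
  then show ?case by (simp, intro ispoly_sum) (auto intro: ispoly_mult)
qed

lemma ispoly_kry: "(\<forall>t u. ispoly (\<lambda>s. A s t u)) \<Longrightarrow> ispoly (\<lambda>s. kry N (A s) j u)"
  unfolding kry_def by (intro ispoly_sum) (auto intro: ispoly_mpow)

lemma ispoly_dt: "(\<forall>i j. ispoly (\<lambda>s. F s i j)) \<Longrightarrow> ispoly (\<lambda>s. dt N (F s))"
  unfolding dt_formula
  by (intro ispoly_sum ballI ispoly_mult ispoly_const ispoly_prod)
     (auto simp: finite_permutations)

lemma vandermonde_nz:
  assumes "inj_on d {..<N}"
  shows "dt N (\<lambda>j u. d u ^ j) \<noteq> 0"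
proof
  assume "dt N (\<lambda>j u. d u ^ j) = 0"
  then have "dt N (\<lambda>u j. d u ^ j) = 0" using dt_transpose[of N "\<lambda>j u. d u ^ j"] by simp
  then obtain w where w: "\<exists>j<N. w j \<noteq> 0" "\<forall>u<N. (\<Sum>j<N. d u ^ j * w j) = 0"
    unfolding dt_zero_iff by blast
  then obtain j0 where j0: "j0 < N" "w j0 \<noteq> 0" by blast
  define q where "q = (\<Sum>j<N. monom (w j) j)"
  have pq: "poly q x = (\<Sum>j<N. x ^ j * w j)" for x
    unfolding q_def by (simp add: poly_sum poly_monom mult_ac)
  have "coeff q j0 = w j0"
    unfolding q_def using j0(1) by (simp add: coeff_sum coeff_monom sum.delta)
  then have qnz: "q \<noteq> 0" using j0 by auto
  have "degree q < N"
    unfolding q_def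
  proof (rule degree_sum_less)
    show "0 < N" using j0 by simp
    fix x assume "x \<in> {..<N}"
    then show "degree (monom (w x) x) < N" using degree_monom_le[of "w x" x] by simp
  qed
  then have dq: "degree q < N" .
  have "d ` {..<N} \<subseteq> {x. poly q x = 0}" using w(2) pq by auto
  then have "card (d ` {..<N}) \<le> card {x. poly q x = 0}"
    using poly_roots_finite[OF qnz] by (rule card_mono[rotated])
  also have "\<dots> \<le> degree q" by (rule card_poly_roots_bound[OF qnz])
  finally show False using dq card_image[OF assms] by simp
qed

lemma mpow_diag: "t < N \<Longrightarrow> mpow N (\<lambda>t u. if t = u then d t else 0) j t u = (if t = u then d t ^ j else 0)"
proof (induction j arbitrary: u)
  case 0 then show ?case by simp
next
  case (Suc j)
  have "(\<Sum>r<N. (if t = r then d t ^ j else 0) * (if r = u then d r else 0))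
        = (\<Sum>r<N. if r = t then (if t = u then d t ^ Suc j else 0) else 0)"
    by (rule sum.cong) auto
  then show ?case using Suc by (simp add: sum.delta)
qed

lemma mpow_scale: "mpow N (\<lambda>t u. A t u / s) j t u = mpow N A j t u / s ^ j"
  by (induction j arbitrary: t u) (simp_all add: sum_divide_distrib ac_simps)

lemma dt_cong: "(\<And>i j. i < N \<Longrightarrow> j < N \<Longrightarrow> f i j = g i j) \<Longrightarrow> dt N f = dt N g"
  unfolding dt_def by (rule arg_cong[where f=det]) (rule eq_matI, auto)

lemma kry_generic:
  assumes "inj_on d0 {..<N}"
  shows "\<exists>s. s \<noteq> 0 \<and> dt N (kry N (\<lambda>t u. (if t = u then d0 t / s else 0) + C t u)) \<noteq> 0"
proof -
  define A where "A s = (\<lambda>t u. (if t = u then d0 t else 0) + s * C t u)" for s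
  have "ispoly (\<lambda>s. dt N (kry N (A s)))"
    unfolding A_def
    by (intro ispoly_dt allI ispoly_kry ispoly_add ispoly_mult ispoly_const ispoly_id)
  then obtain q where q: "\<And>s. dt N (kry N (A s)) = poly q s" unfolding ispoly_def by blast
  have "kry N (A 0) = (\<lambda>j u. if u < N then d0 u ^ j else 0)"
  proof (intro ext)
    fix j u
    have "(\<Sum>t<N. mpow N (\<lambda>t u. if t = u then d0 t else 0) j t u) = (\<Sum>t<N. if t = u then d0 u ^ j else 0)"
      by (rule sum.cong[OF refl]) (simp add: mpow_diag[of _ N d0 j u])
    then show "kry N (A 0) j u = (if u < N then d0 u ^ j else 0)"
      unfolding A_def kry_def by (simp add: sum.delta')
  qed
  then have "dt N (kry N (A 0)) = dt N (\<lambda>j u. d0 u ^ j)"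
    by (intro dt_cong) simp
  then have "poly q 0 \<noteq> 0" using vandermonde_nz[OF assms] q by simp
  then have "q \<noteq> 0" by auto
  then have "finite ({x. poly q x = 0} \<union> {0})" using poly_roots_finite by auto
  then obtain s where s: "s \<notin> {x. poly q x = 0} \<union> {0}"
    using ex_new_if_finite[OF infinite_UNIV_char_0] by blast
  have "kry N (\<lambda>t u. (if t = u then d0 t / s else 0) + C t u) = (\<lambda>j u. (1 / s ^ j) * kry N (A s) j u)"
  proof (intro ext)
    fix j u
    have "(\<lambda>t u. (if t = u then d0 t / s else 0) + C t u) = (\<lambda>t u. A s t u / s)"
      using s unfolding A_def by (auto simp: field_simps intro!: ext)
    then show "kry N (\<lambda>t u. (if t = u then d0 t / s else 0) + C t u) j u = (1 / s ^ j) * kry N (A s) j u"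
      unfolding kry_def by (simp add: mpow_scale sum_divide_distrib)
  qed
  then have "dt N (kry N (\<lambda>t u. (if t = u then d0 t / s else 0) + C t u))
      = (\<Prod>i=0..<N. 1 / s ^ i) * poly q s"
    using dt_rowscale[of N "\<lambda>j. 1 / s ^ j" "kry N (A s)"] q by simp
  moreover have "(\<Prod>i=0..<N. 1 / s ^ i) \<noteq> 0" using s by simp
  ultimately show ?thesis using s by auto
qed

lemma polyfun_sum: "finite A \<Longrightarrow> (\<forall>x\<in>A. polyfun n k (f x)) \<Longrightarrow> polyfun n k (\<lambda>\<alpha> z. \<Sum>x\<in>A. f x \<alpha> z)"
  by (induction A rule: finite_induct) (auto intro: polyfun.const polyfun.add)

lemma polyfun_prod: "finite A \<Longrightarrow> (\<forall>x\<in>A. polyfun n k (f x)) \<Longrightarrow> polyfun n k (\<lambda>\<alpha> z. \<Prod>x\<in>A. f x \<alpha> z)"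
  by (induction A rule: finite_induct) (auto intro: polyfun.const polyfun.mult)

lemma polyfun_if: "polyfun n k p \<Longrightarrow> polyfun n k (\<lambda>\<alpha> z. if b then p \<alpha> z else 0)"
  by (cases b) (auto intro: polyfun.const)

lemma polyfun_mpow: "(\<forall>t u. polyfun n k (\<lambda>\<alpha> z. M \<alpha> z t u)) \<Longrightarrow> polyfun n k (\<lambda>\<alpha> z. mpow N (M \<alpha> z) j t u)"
proof (induction j arbitrary: t u)
  case 0
  then show ?case by (simp add: polyfun.const)
next
  case (Suc j)
  then show ?case by (simp, intro polyfun_sum) (auto intro: polyfun.mult)
qed

lemma polyfun_kry: "(\<forall>t u. polyfun n k (\<lambda>\<alpha> z. M \<alpha> z t u)) \<Longrightarrow> polyfun n k (\<lambda>\<alpha> z. kry N (M \<alpha> z) j u)"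
  unfolding kry_def by (intro polyfun_sum) (auto intro: polyfun_mpow)

lemma polyfun_dt: "(\<forall>i j. polyfun n k (\<lambda>\<alpha> z. F \<alpha> z i j)) \<Longrightarrow> polyfun n k (\<lambda>\<alpha> z. dt N (F \<alpha> z))"
  unfolding dt_formula
  by (intro polyfun_sum ballI polyfun.mult polyfun.const polyfun_prod)
     (auto simp: finite_permutations)

lemma sum_set_nth: "distinct bs \<Longrightarrow> sum g (set bs) = (\<Sum>u<length bs. g (bs ! u))"
proof -
  assume d: "distinct bs"
  have "set bs = (\<lambda>u. bs ! u) ` {..<length bs}" by (auto simp: in_set_conv_nth)
  moreover have "inj_on (\<lambda>u. bs ! u) {..<length bs}" using d by (simp add: inj_on_nth)
  ultimately show ?thesis by (simp add: sum.reindex)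
qed

lemma core:
  fixes H :: "(nat \<Rightarrow> complex) \<Rightarrow> (nat \<Rightarrow> complex) \<Rightarrow> nat \<Rightarrow> grass \<Rightarrow> grass"
    and B :: "(nat \<times> nat) set set"
    and d :: "(nat \<times> nat) set \<Rightarrow> (nat \<Rightarrow> complex) \<Rightarrow> (nat \<Rightarrow> complex) \<Rightarrow> complex"
    and C :: "(nat \<times> nat) set \<Rightarrow> (nat \<times> nat) set \<Rightarrow> complex"
    and lam :: "(nat \<Rightarrow> complex) \<Rightarrow> (nat \<Rightarrow> complex) \<Rightarrow> (nat \<Rightarrow> complex) \<Rightarrow> complex"
  assumes fin: "finite B"
    and V: "V = {f. \<forall>S. f S \<noteq> 0 \<longrightarrow> S \<in> B}"
    and hom: "\<And>\<alpha> z a c f. H \<alpha> z a (\<lambda>T. c * f T) = (\<lambda>T. c * H \<alpha> z a f T)"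
    and eig: "\<And>\<alpha> z v \<mu> T. inj_on \<alpha> {..<n} \<Longrightarrow> inj_on z {..<k} \<Longrightarrow> v \<in> V \<Longrightarrow>
        (\<forall>a\<in>I. H \<alpha> z a v = (\<lambda>T. \<mu> a * v T)) \<Longrightarrow> T \<in> B \<Longrightarrow>
        (\<Sum>S\<in>B. ((if T = S then d S \<alpha> z else 0) + C T S) * v S) = lam \<alpha> z \<mu> * v T"
    and dpoly: "\<And>S. polyfun n k (d S)"
    and dscale: "\<And>S \<alpha> z s. d S (\<lambda>i. \<alpha> i / s) z = d S \<alpha> z / s"
    and dinj: "inj_on (\<lambda>S. d S \<alpha>0 z0) B"
  shows "generic n k (\<lambda>\<alpha> z. common_eigenspaces_one_dim I (H \<alpha> z) V)"
proof -
  obtain bs where bs: "set bs = B" "distinct bs" using finite_distinct_list[OF fin] by blast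
  define N where "N = length bs"
  define Mf where "Mf \<alpha> z t u = (if t = u then d (bs!t) \<alpha> z else 0) + C (bs!t) (bs!u)" for \<alpha> z t u
  define P where "P \<alpha> z = dt N (kry N (Mf \<alpha> z))" for \<alpha> z
  have nth_inj: "bs ! t = bs ! u \<longleftrightarrow> t = u" if "t < N" "u < N" for t u
    using bs(2) that unfolding N_def by (simp add: nth_eq_iff_index_eq)
  have sumB: "(\<Sum>S\<in>B. g S) = (\<Sum>u<N. g (bs ! u))" for g :: "_ \<Rightarrow> complex"
    using sum_set_nth[OF bs(2)] bs(1) unfolding N_def by metis
  have Pp: "polyfun n k P"
    unfolding P_def Mf_def
    by (intro polyfun_dt allI polyfun_kry polyfun.add polyfun_if polyfun.const dpoly)
  have "inj_on (\<lambda>t. d (bs!t) \<alpha>0 z0) {..<N}"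
  proof (rule inj_onI)
    fix t u assume tu: "t \<in> {..<N}" "u \<in> {..<N}" "d (bs!t) \<alpha>0 z0 = d (bs!u) \<alpha>0 z0"
    then have "bs ! t \<in> B" "bs ! u \<in> B" using bs(1) unfolding N_def by auto
    then have "bs ! t = bs ! u" using dinj tu(3) by (meson inj_onD)
    then show "t = u" using nth_inj tu by auto
  qed
  from kry_generic[OF this, of "\<lambda>t u. C (bs!t) (bs!u)"]
  obtain s where s: "s \<noteq> 0" "dt N (kry N (\<lambda>t u. (if t = u then d (bs!t) \<alpha>0 z0 / s else 0) + C (bs!t) (bs!u))) \<noteq> 0"
    by blast
  have "Mf (\<lambda>i. \<alpha>0 i / s) z0 = (\<lambda>t u. (if t = u then d (bs!t) \<alpha>0 z0 / s else 0) + C (bs!t) (bs!u))"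
    unfolding Mf_def by (intro ext) (simp add: dscale)
  then have Pnz: "P (\<lambda>i. \<alpha>0 i / s) z0 \<noteq> 0" unfolding P_def using s(2) by simp
  have Q: "common_eigenspaces_one_dim I (H \<alpha> z) V"
    if inj: "inj_on \<alpha> {..<n}" "inj_on z {..<k}" and P0: "P \<alpha> z \<noteq> 0" for \<alpha> z
  proof -
    have zero: "H \<alpha> z a (\<lambda>T. 0) = (\<lambda>T. 0)" for a
      using hom[of \<alpha> z a 0 "\<lambda>T. 0"] by simp
    have vec_eig: "\<forall>t<N. (\<Sum>u<N. Mf \<alpha> z t u * v (bs ! u)) = lam \<alpha> z \<mu> * v (bs ! t)"
      if "v \<in> V" "\<forall>a\<in>I. H \<alpha> z a v = (\<lambda>T. \<mu> a * v T)" for v \<mu>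
    proof (intro allI impI)
      fix t assume t: "t < N"
      then have tB: "bs ! t \<in> B" using bs(1) unfolding N_def by auto
      have "(\<Sum>u<N. Mf \<alpha> z t u * v (bs ! u))
          = (\<Sum>u<N. ((if bs ! t = bs ! u then d (bs ! u) \<alpha> z else 0) + C (bs ! t) (bs ! u)) * v (bs ! u))"
        unfolding Mf_def using nth_inj t by (intro sum.cong refl) auto
      also have "\<dots> = lam \<alpha> z \<mu> * v (bs ! t)"
        using eig[OF inj that tB] unfolding sumB by simp
      finally show "(\<Sum>u<N. Mf \<alpha> z t u * v (bs ! u)) = lam \<alpha> z \<mu> * v (bs ! t)" .
    qed
    show ?thesis unfolding common_eigenspaces_one_dim_def Let_def
    proof (intro allI impI)
      fix \<mu> :: "nat \<Rightarrow> complex"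
      let ?E = "{v \<in> V. \<forall>a\<in>I. H \<alpha> z a v = (\<lambda>T. \<mu> a * v T)}"
      assume ne: "?E \<noteq> {\<lambda>T. 0}"
      have "(\<lambda>T. 0) \<in> ?E" using zero V by auto
      then obtain v where v: "v \<in> ?E" "v \<noteq> (\<lambda>T. 0)" using ne by blast
      then obtain S0 where S0: "v S0 \<noteq> 0" by auto
      then have "S0 \<in> B" using v(1) V by auto
      then obtain t0 where t0: "t0 < N" "bs ! t0 = S0" using bs(1) unfolding N_def by (auto simp: in_set_conv_nth)
      have "?E = {(\<lambda>T. c * v T) | c. True}"
      proof (intro equalityI subsetI)
        fix w assume w: "w \<in> ?E"
        obtain c where c: "\<forall>t<N. w (bs ! t) = c * v (bs ! t)"
          using kry_one_dim[of N "Mf \<alpha> z" "\<lambda>t. v (bs ! t)" "lam \<alpha> z \<mu>" "\<lambda>t. w (bs ! t)"]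
            P0 vec_eig[of v \<mu>] vec_eig[of w \<mu>] v(1) w t0 S0 unfolding P_def by blast
        have "w = (\<lambda>T. c * v T)"
        proof
          fix T show "w T = c * v T"
          proof (cases "T \<in> B")
            case True
            then obtain t where "t < N" "bs ! t = T" using bs(1) unfolding N_def by (auto simp: in_set_conv_nth)
            then show ?thesis using c by auto
          next
            case False
            then have "v T = 0" "w T = 0" using v(1) w V by blast+
            then show ?thesis by simp
          qed
        qed
        then show "w \<in> {(\<lambda>T. c * v T) | c. True}" by blast
      next
        fix w assume "w \<in> {(\<lambda>T. c * v T) | c. True}"
        then obtain c where c: "w = (\<lambda>T. c * v T)" by blast
        have "w \<in> V" using v(1) V c by auto
        moreover have "\<forall>a\<in>I. H \<alpha> z a w = (\<lambda>T. \<mu> a * w T)"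
          using v(1) c hom by (auto simp: mult_ac)
        ultimately show "w \<in> ?E" by blast
      qed
      then show "\<exists>v. v \<noteq> (\<lambda>T. 0) \<and> ?E = {(\<lambda>T. c * v T) | c. True}" using v(2) by blast
    qed
  qed
  show ?thesis unfolding generic_def using Pp Pnz Q by blast
qed

lemma lexless_irrefl: "\<not> lexless x x"
  unfolding lexless_def by auto

lemma lexless_flip: "x \<noteq> y \<Longrightarrow> lexless x y \<longleftrightarrow> \<not> lexless y x"
  unfolding lexless_def by (cases x, cases y) auto

definition sg :: "(nat \<times> nat) set \<Rightarrow> nat \<times> nat \<Rightarrow> complex" where
  "sg R y = (-1) ^ card {x \<in> R. lexless x y}"

lemma sg_insert: "finite R \<Longrightarrow> w \<notin> R \<Longrightarrow> sg (insert w R) y = (if lexless w y then -1 else 1) * sg R y"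
proof -
  assume f: "finite R" and w: "w \<notin> R"
  show ?thesis
  proof (cases "lexless w y")
    case True
    then have "{x \<in> insert w R. lexless x y} = insert w {x \<in> R. lexless x y}" by auto
    moreover have "card (insert w {x \<in> R. lexless x y}) = Suc (card {x \<in> R. lexless x y})"
      using f w by (simp add: card_insert_disjoint)
    ultimately show ?thesis using True unfolding sg_def by simp
  next
    case False
    then have "{x \<in> insert w R. lexless x y} = {x \<in> R. lexless x y}" by auto
    then show ?thesis using False unfolding sg_def by simp
  qed
qed

lemma sg_sq: "sg R y * sg R y = 1"
  unfolding sg_def by (simp flip: power_mult_distrib)

definition EE :: "nat \<times> nat \<Rightarrow> nat \<times> nat \<Rightarrow> grass \<Rightarrow> grass" where
  "EE c d f = xop c (dop d f)"

lemma E_EE: "E a i b j f = EE (a, i) (b, j) f"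
  unfolding E_def EE_def by simp

lemma EE_eq: "EE c d f T = (if c \<in> T \<and> d \<notin> T - {c}
     then sg (T - {c}) c * sg (T - {c}) d * f (insert d (T - {c})) else 0)"
proof -
  have "{x \<in> T. lexless x c} = {x \<in> T - {c}. lexless x c}" using lexless_irrefl by auto
  then show ?thesis unfolding EE_def xop_def dop_def sg_def by auto
qed

lemma EE_diag: "EE c c f T = (if c \<in> T then f T else 0)"
  unfolding EE_eq by (simp add: sg_sq insert_absorb)

definition lin :: "(grass \<Rightarrow> grass) \<Rightarrow> bool" where
  "lin Op \<longleftrightarrow> (\<forall>(A :: (nat \<times> nat) set set) h g.
      Op (\<lambda>T. \<Sum>x\<in>A. h x * g x T) = (\<lambda>T. \<Sum>x\<in>A. h x * Op (g x) T))"

lemma linD: fixes A :: "(nat \<times> nat) set set" shows "lin Op \<Longrightarrow> Op (\<lambda>T. \<Sum>x\<in>A. h x * g x T) = (\<lambda>T. \<Sum>x\<in>A. h x * Op (g x) T)"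
  unfolding lin_def by blast

lemma lin_EE: "lin (EE c d)"
  unfolding lin_def EE_eq by (auto intro!: ext simp: sum_distrib_left mult_ac)

lemma lin_comp: "lin O1 \<Longrightarrow> lin O2 \<Longrightarrow> lin (\<lambda>f. O1 (O2 f))"
  unfolding lin_def by simp

lemma lin_sum: "(\<And>y. y \<in> Y \<Longrightarrow> lin (Op y)) \<Longrightarrow> lin (\<lambda>f T. \<Sum>y\<in>Y. Op y f T)"
  unfolding lin_def
proof (intro allI ext)
  fix A :: "(nat \<times> nat) set set" and h g T
  assume "\<And>y. y \<in> Y \<Longrightarrow> \<forall>(A :: (nat \<times> nat) set set) h g.
      Op y (\<lambda>T. \<Sum>x\<in>A. h x * g x T) = (\<lambda>T. \<Sum>x\<in>A. h x * Op y (g x) T)"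
  then have "(\<Sum>y\<in>Y. Op y (\<lambda>T. \<Sum>x\<in>A. h x * g x T) T) = (\<Sum>y\<in>Y. \<Sum>x\<in>A. h x * Op y (g x) T)"
    by (intro sum.cong) auto
  also have "\<dots> = (\<Sum>x\<in>A. h x * (\<Sum>y\<in>Y. Op y (g x) T))"
    by (subst sum.swap) (simp add: sum_distrib_left)
  finally show "(\<Sum>y\<in>Y. Op y (\<lambda>T. \<Sum>x\<in>A. h x * g x T) T) = (\<Sum>x\<in>A. h x * (\<Sum>y\<in>Y. Op y (g x) T))" .
qed

lemma lin_scale: "lin Op \<Longrightarrow> lin (\<lambda>f T. c * Op f T)"
  unfolding lin_def by (auto intro!: ext simp: sum_distrib_left mult_ac)

lemma lin_apply:
  assumes "lin Op" "finite B" "\<forall>S. v S \<noteq> 0 \<longrightarrow> S \<in> B"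
  shows "Op v T = (\<Sum>S\<in>B. v S * Op (\<lambda>T. if T = S then 1 else 0) T)"
proof -
  have "v = (\<lambda>T. \<Sum>S\<in>B. v S * (if T = S then 1 else 0))"
  proof
    fix T
    show "v T = (\<Sum>S\<in>B. v S * (if T = S then 1 else 0))"
    proof (cases "T \<in> B")
      case True
      have "(\<Sum>S\<in>B. v S * (if T = S then 1 else 0)) = (\<Sum>S\<in>B. if T = S then v T else 0)"
        by (rule sum.cong) auto
      then show ?thesis using True assms(2) by simp
    next
      case False
      then have "v T = 0" using assms(3) by blast
      moreover have "(\<Sum>S\<in>B. v S * (if T = S then 1 else 0)) = 0"
        using False by (intro sum.neutral) auto
      ultimately show ?thesis by simp
    qed
  qed
  then have "Op v = Op (\<lambda>T. \<Sum>S\<in>B. v S * (\<lambda>S T. if T = S then 1 else 0) S T)" by simp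
  also have "\<dots> = (\<lambda>T. \<Sum>S\<in>B. v S * Op ((\<lambda>S T. if T = S then 1 else 0) S) T)"
    using linD[OF assms(1), where A=B and h=v and g="\<lambda>S T. if T = S then 1 else 0"] by simp
  finally show ?thesis by simp
qed

lemma EE_hom: "EE c d (\<lambda>T. h * f T) = (\<lambda>T. h * EE c d f T)"
  unfolding EE_eq by (auto intro!: ext simp: mult_ac)

lemma EE_comm_inf:
  assumes "infinite T" and inf: "\<And>S. infinite S \<Longrightarrow> f S = 0"
  shows "EE c d (EE c' d' f) T = 0"
proof -
  have i1: "infinite (insert d' (insert d (T - {c}) - {c'}))" using assms(1) by simp
  show ?thesis unfolding EE_eq by (simp add: inf[OF i1])
qed

lemma EE_comm_zero:
  assumes "\<not> (c \<in> T \<and> d \<notin> T - {c} \<and> c' \<in> insert d (T - {c}) \<and> d' \<notin> insert d (T - {c}) - {c'})"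
  shows "EE c d (EE c' d' f) T = 0"
proof (cases "c \<in> T \<and> d \<notin> T - {c}")
  case True
  then have "\<not> (c' \<in> insert d (T - {c}) \<and> d' \<notin> insert d (T - {c}) - {c'})" using assms by blast
  then have "EE c' d' f (insert d (T - {c})) = 0" unfolding EE_eq by (simp only: if_False)
  then show ?thesis unfolding EE_eq[of c d] by simp
next
  case False
  then show ?thesis unfolding EE_eq[of c d] by (simp only: if_False)
qed

lemma EE_comm:
  assumes ne: "c \<noteq> c'" "c \<noteq> d'" "d \<noteq> c'" "d \<noteq> d'"
    and inf: "\<And>S. infinite S \<Longrightarrow> f S = 0"
  shows "EE c d (EE c' d' f) T = EE c' d' (EE c d f) T"
proof (cases "finite T")
  case False
  then show ?thesis using EE_comm_inf[OF False inf, where c=c and d=d and c'=c' and d'=d'] EE_comm_inf[OF False inf, where c=c' and d=d' and c'=c and d'=d] by simp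
next
  case True
  have cond: "(c \<in> T \<and> d \<notin> T - {c} \<and> c' \<in> insert d (T - {c}) \<and> d' \<notin> insert d (T - {c}) - {c'})
     \<longleftrightarrow> (c' \<in> T \<and> d' \<notin> T - {c'} \<and> c \<in> insert d' (T - {c'}) \<and> d \<notin> insert d' (T - {c'}) - {c})"
    using ne by blast
  show ?thesis
  proof (cases "c \<in> T \<and> d \<notin> T - {c} \<and> c' \<in> insert d (T - {c}) \<and> d' \<notin> insert d (T - {c}) - {c'}")
    case False
    have z1: "EE c d (EE c' d' f) T = 0" by (rule EE_comm_zero) (use False in blast)
    have z2: "EE c' d' (EE c d f) T = 0" by (rule EE_comm_zero) (use False cond in blast)
    show ?thesis using z1 z2 by simp
  next
    case hyp: True
    define R where "R = T - {c} - {c'}"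
    have fR: "finite R" using True unfolding R_def by simp
    have cT: "c \<in> T" "c' \<in> T" using hyp ne by auto
    have nR: "c \<notin> R" "c' \<notin> R" "d \<notin> R" "d' \<notin> R" using hyp ne unfolding R_def by auto
    have e1: "T - {c} = insert c' R" using cT ne unfolding R_def by auto
    have e2: "insert d (T - {c}) - {c'} = insert d R" using cT ne unfolding R_def by auto
    have e3: "T - {c'} = insert c R" using cT ne unfolding R_def by auto
    have e4: "insert d' (T - {c'}) - {c} = insert d' R" using cT ne unfolding R_def by auto
    have e5: "insert d' (insert d (T - {c}) - {c'}) = insert d (insert d' (T - {c'}) - {c})"
      using ne by auto
    have L1: "lexless d c' \<longleftrightarrow> \<not> lexless c' d" by (rule lexless_flip) (use ne in auto)
    have L2: "lexless c c' \<longleftrightarrow> \<not> lexless c' c" by (rule lexless_flip) (use ne in auto)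
    have L3: "lexless d' c \<longleftrightarrow> \<not> lexless c d'" by (rule lexless_flip) (use ne in auto)
    have L4: "lexless d' d \<longleftrightarrow> \<not> lexless d d'" by (rule lexless_flip) (use ne in auto)
    have hyp2: "c' \<in> T \<and> d' \<notin> T - {c'} \<and> c \<in> insert d' (T - {c'}) \<and> d \<notin> insert d' (T - {c'}) - {c}"
      using hyp cond by blast
    have lhs: "EE c d (EE c' d' f) T = sg (insert c' R) c * sg (insert c' R) d *
        (sg (insert d R) c' * sg (insert d R) d' * f (insert d' (insert d (T - {c}) - {c'})))"
      using hyp unfolding EE_eq by (simp add: e1[symmetric] e2)
    have rhs: "EE c' d' (EE c d f) T = sg (insert c R) c' * sg (insert c R) d' *
        (sg (insert d' R) c * sg (insert d' R) d * f (insert d (insert d' (T - {c'}) - {c})))"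
      using hyp2 unfolding EE_eq by (simp add: e3[symmetric] e4)
    show ?thesis
      unfolding lhs rhs e5 using fR nR
      by (simp add: sg_insert L1 L2 L3 L4 mult_ac)
  qed
qed

lemma pow2_lt: "(\<Sum>x<m. (2::nat)^x) < 2^m"
  by (induction m) auto

lemma pow2_sum_lt: "A \<subseteq> {..<m} \<Longrightarrow> (\<Sum>x\<in>A. (2::nat)^x) < 2^m"
  using sum_mono2[of "{..<m}" A "\<lambda>x. (2::nat)^x"] pow2_lt[of m] by simp

lemma pow2_inj: "A \<subseteq> {..<m} \<Longrightarrow> A' \<subseteq> {..<m} \<Longrightarrow> (\<Sum>x\<in>A. (2::nat)^x) = (\<Sum>x\<in>A'. 2^x) \<Longrightarrow> A = A'"
proof (induction m arbitrary: A A')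
  case 0
  then show ?case by auto
next
  case (Suc m)
  have fA: "finite A" "finite A'" using Suc.prems finite_subset by blast+
  have s0: "A - {m} \<subseteq> {..<m}" "A' - {m} \<subseteq> {..<m}" using Suc.prems(1,2) by (auto simp: less_Suc_eq)
  have rem: "(\<Sum>x\<in>X. (2::nat)^x) = (if m \<in> X then 2^m else 0) + (\<Sum>x\<in>X - {m}. 2^x)" if "finite X" for X
    using that by (simp add: sum.remove)
  show ?case
  proof (cases "m \<in> A"; cases "m \<in> A'")
    assume a: "m \<in> A" "m \<in> A'"
    then have "(\<Sum>x\<in>A - {m}. (2::nat)^x) = (\<Sum>x\<in>A' - {m}. 2^x)"
      using Suc.prems(3) rem[OF fA(1)] rem[OF fA(2)] by simp
    then have "A - {m} = A' - {m}" using Suc.IH s0 by blast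
    then show ?thesis using a by blast
  next
    assume a: "m \<notin> A" "m \<notin> A'"
    then have "A \<subseteq> {..<m}" "A' \<subseteq> {..<m}" using Suc.prems(1,2) by (auto simp: less_Suc_eq)
    then show ?thesis using Suc.IH Suc.prems(3) by blast
  next
    assume a: "m \<in> A" "m \<notin> A'"
    then have "A' \<subseteq> {..<m}" using Suc.prems(2) by (auto simp: less_Suc_eq)
    then have "(\<Sum>x\<in>A'. (2::nat)^x) < 2^m" by (rule pow2_sum_lt)
    moreover have "(\<Sum>x\<in>A. (2::nat)^x) \<ge> 2^m" using rem[OF fA(1)] a by simp
    ultimately show ?thesis using Suc.prems(3) by simp
  next
    assume a: "m \<notin> A" "m \<in> A'"
    then have "A \<subseteq> {..<m}" using Suc.prems(1) by (auto simp: less_Suc_eq)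
    then have "(\<Sum>x\<in>A. (2::nat)^x) < 2^m" by (rule pow2_sum_lt)
    moreover have "(\<Sum>x\<in>A'. (2::nat)^x) \<ge> 2^m" using rem[OF fA(2)] a by simp
    ultimately show ?thesis using Suc.prems(3) by simp
  qed
qed

lemma box_sum:
  fixes k n :: nat
  assumes "S \<subseteq> {..<k} \<times> {..<n}"
  shows "(\<Sum>a<k. \<Sum>i<n. if (a, i) \<in> S then g a i else (0::complex)) = (\<Sum>x\<in>S. g (fst x) (snd x))"
proof -
  have "(\<Sum>a<k. \<Sum>i<n. if (a, i) \<in> S then g a i else (0::complex))
      = (\<Sum>x\<in>{..<k} \<times> {..<n}. if x \<in> S then g (fst x) (snd x) else 0)"
    by (subst sum.cartesian_product) (simp add: case_prod_beta)
  also have "\<dots> = (\<Sum>x\<in>({..<k} \<times> {..<n}) \<inter> S. g (fst x) (snd x))"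
    by (rule sum.inter_restrict[symmetric]) simp
  also have "({..<k} \<times> {..<n}) \<inter> S = S" using assms by blast
  finally show ?thesis .
qed

definition enc :: "nat \<Rightarrow> nat \<times> nat \<Rightarrow> nat" where
  "enc n x = snd x + fst x * Suc n"

lemma divmod_aux:
  fixes b :: nat
  assumes "i < b" "i' < b" "i + a * b = i' + a' * b"
  shows "i = i' \<and> a = a'"
proof -
  have b: "b \<noteq> 0" using assms(1) by simp
  have "(i + a * b) mod b = i" "(i' + a' * b) mod b = i'" using assms(1,2) by simp_all
  moreover have "(i + a * b) div b = a" "(i' + a' * b) div b = a'" using assms(1,2) b by simp_all
  ultimately show ?thesis using assms(3) by metis
qed

lemma enc_inj: "inj_on (enc n) ({..<k} \<times> {..<n})"
proof (rule inj_onI)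
  fix x y assume xy: "x \<in> {..<k} \<times> {..<n}" "y \<in> {..<k} \<times> {..<n}" "enc n x = enc n y"
  have "snd x < Suc n" "snd y < Suc n" using xy(1,2) by auto
  from divmod_aux[OF this] xy(3) have "snd x = snd y \<and> fst x = fst y" unfolding enc_def by blast
  then show "x = y" by (simp add: prod_eq_iff)
qed

lemma enc_bound: "x \<in> {..<k} \<times> {..<n} \<Longrightarrow> enc n x < k * (n + 1)"
proof -
  assume x: "x \<in> {..<k} \<times> {..<n}"
  then have "fst x + 1 \<le> k" "snd x < n + 1" by auto
  then have "snd x + fst x * Suc n < (fst x + 1) * Suc n" by simp
  also have "\<dots> \<le> k * Suc n" using \<open>fst x + 1 \<le> k\<close> by (rule mult_right_mono) simp
  finally show ?thesis unfolding enc_def by simp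
qed

lemma dval:
  assumes "S \<subseteq> {..<k} \<times> {..<n}"
  shows "(\<Sum>a<k. \<Sum>i<n. if (a, i) \<in> S then (2::complex)^(a*(n+1)) * 2^i else 0)
       = of_nat (\<Sum>y\<in>enc n ` S. 2^y)"
proof -
  have "(\<Sum>a<k. \<Sum>i<n. if (a, i) \<in> S then (2::complex)^(a*(n+1)) * 2^i else 0)
       = (\<Sum>x\<in>S. (2::complex)^(fst x*(n+1)) * 2^(snd x))"
    by (rule box_sum[OF assms])
  also have "\<dots> = (\<Sum>x\<in>S. of_nat ((2::nat) ^ enc n x))"
    unfolding enc_def by (simp add: power_add mult_ac)
  also have "\<dots> = of_nat (\<Sum>x\<in>S. (2::nat) ^ enc n x)" by simp
  also have "(\<Sum>x\<in>S. (2::nat) ^ enc n x) = (\<Sum>y\<in>enc n ` S. 2^y)"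
    using inj_on_subset[OF enc_inj assms] by (simp add: sum.reindex)
  finally show ?thesis .
qed

lemma dinj_box:
  "inj_on (\<lambda>S. \<Sum>a<k. \<Sum>i<n. if (a, i) \<in> S then (2::complex)^(a*(n+1)) * 2^i else 0)
          {S. S \<subseteq> {..<k} \<times> {..<n}}"
proof (rule inj_onI)
  fix S S' assume S: "S \<in> {S. S \<subseteq> {..<k} \<times> {..<n}}" "S' \<in> {S. S \<subseteq> {..<k} \<times> {..<n}}"
    and eq: "(\<Sum>a<k. \<Sum>i<n. if (a, i) \<in> S then (2::complex)^(a*(n+1)) * 2^i else 0)
           = (\<Sum>a<k. \<Sum>i<n. if (a, i) \<in> S' then (2::complex)^(a*(n+1)) * 2^i else 0)"
  have S1: "S \<subseteq> {..<k} \<times> {..<n}" and S2: "S' \<subseteq> {..<k} \<times> {..<n}" using S by auto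
  have "(of_nat (\<Sum>y\<in>enc n ` S. 2^y) :: complex) = of_nat (\<Sum>y\<in>enc n ` S'. 2^y)"
    using eq unfolding dval[OF S1] dval[OF S2] .
  then have e: "(\<Sum>y\<in>enc n ` S. (2::nat)^y) = (\<Sum>y\<in>enc n ` S'. 2^y)" by (simp only: of_nat_eq_iff)
  have b1: "enc n ` S \<subseteq> {..<k * (n+1)}" using S1 enc_bound by (meson image_subsetI lessThan_iff subsetD)
  have b2: "enc n ` S' \<subseteq> {..<k * (n+1)}" using S2 enc_bound by (meson image_subsetI lessThan_iff subsetD)
  have "enc n ` S = enc n ` S'" by (rule pow2_inj[OF b1 b2 e])
  then show "S = S'" using inj_on_image_eq_iff[OF enc_inj S1 S2] by simp
qed

definition Bset :: "nat \<Rightarrow> nat \<Rightarrow> (nat \<Rightarrow> nat) \<Rightarrow> (nat \<Rightarrow> nat) \<Rightarrow> (nat \<times> nat) set set" where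
  "Bset k n l m = {S. S \<subseteq> {..<k} \<times> {..<n} \<and>
      (\<forall>a<k. card {i. (a, i) \<in> S} = l a) \<and> (\<forall>i<n. card {a. (a, i) \<in> S} = m i)}"

lemma Pweight_eq: "Pweight k n l m = {f. \<forall>S. f S \<noteq> 0 \<longrightarrow> S \<in> Bset k n l m}"
  unfolding Pweight_def Bset_def by simp

lemma Bset_sub: "Bset k n l m \<subseteq> {S. S \<subseteq> {..<k} \<times> {..<n}}"
  unfolding Bset_def by auto

lemma Bset_fin: "finite (Bset k n l m)"
proof -
  have "Bset k n l m \<subseteq> Pow ({..<k} \<times> {..<n})" using Bset_sub[of k n l m] by auto
  then show ?thesis by (rule finite_subset) simp
qed

lemma V_inf: "f \<in> Pweight k n l m \<Longrightarrow> infinite S \<Longrightarrow> f S = 0"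
proof (rule ccontr)
  assume "f \<in> Pweight k n l m" "infinite S" "f S \<noteq> 0"
  then have "S \<subseteq> {..<k} \<times> {..<n}" unfolding Pweight_def by blast
  then have "finite S" by (rule finite_subset) simp
  then show False using \<open>infinite S\<close> by simp
qed

definition dd :: "nat \<Rightarrow> nat \<Rightarrow> (nat \<times> nat) set \<Rightarrow> (nat \<Rightarrow> complex) \<Rightarrow> (nat \<Rightarrow> complex) \<Rightarrow> complex" where
  "dd k n S \<alpha> z = (\<Sum>a<k. \<Sum>i<n. if (a, i) \<in> S then z a * \<alpha> i else 0)"

lemma dd_poly: "polyfun n k (dd k n S)"
  unfolding dd_def
  by (intro polyfun_sum ballI polyfun_if polyfun.mult polyfun.zvar polyfun.avar) auto

lemma dd_scale: "dd k n S (\<lambda>i. \<alpha> i / s) z = dd k n S \<alpha> z / s"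
  unfolding dd_def sum_divide_distrib by (intro sum.cong refl) auto

lemma dd_inj: "inj_on (\<lambda>S. dd k n S (\<lambda>i. 2 ^ i) (\<lambda>a. 2 ^ (a * (n + 1)))) (Bset k n l m)"
  unfolding dd_def by (rule inj_on_subset[OF dinj_box Bset_sub])

lemma offdiag: fixes K :: nat shows "(\<Sum>b\<in>{..<K} - {a}. h b) = (\<Sum>b<K. if b = a then 0 else h b)"
  by (rule sum.mono_neutral_cong_left) auto

lemma pairing:
  fixes g X :: "nat \<Rightarrow> nat \<Rightarrow> complex"
  assumes "\<And>a b. a < K \<Longrightarrow> b < K \<Longrightarrow> a \<noteq> b \<Longrightarrow> g a b + g b a = \<kappa> * X a b"
  shows "(\<Sum>a<K. \<Sum>b\<in>{..<K} - {a}. g a b) = \<kappa> / 2 * (\<Sum>a<K. \<Sum>b\<in>{..<K} - {a}. X a b)"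
proof -
  define S1 where "S1 = (\<Sum>a<K. \<Sum>b<K. if b = a then 0 else g a b)"
  have S2: "(\<Sum>a<K. \<Sum>b<K. if b = a then 0 else g b a) = S1"
    unfolding S1_def by (subst sum.swap) (intro sum.cong refl, auto)
  have "S1 + S1 = (\<Sum>a<K. \<Sum>b<K. (if b = a then 0 else g a b) + (if b = a then 0 else g b a))"
    unfolding S1_def using S2[unfolded S1_def] by (simp add: sum.distrib)
  also have "\<dots> = (\<Sum>a<K. \<Sum>b<K. \<kappa> * (if b = a then 0 else X a b))"
    using assms by (intro sum.cong refl) auto
  also have "\<dots> = \<kappa> * (\<Sum>a<K. \<Sum>b<K. if b = a then 0 else X a b)"
    by (simp add: sum_distrib_left)
  finally have e: "S1 + S1 = \<kappa> * (\<Sum>a<K. \<Sum>b<K. if b = a then 0 else X a b)" .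
  have "S1 = (S1 + S1) / 2" by simp
  also have "\<dots> = \<kappa> / 2 * (\<Sum>a<K. \<Sum>b<K. if b = a then 0 else X a b)" unfolding e by simp
  finally have "S1 = \<kappa> / 2 * (\<Sum>a<K. \<Sum>b<K. if b = a then 0 else X a b)" .
  then show ?thesis unfolding offdiag S1_def .
qed

definition W1 :: "nat \<Rightarrow> nat \<Rightarrow> nat \<Rightarrow> grass \<Rightarrow> grass" where
  "W1 n a b f = (\<lambda>T. \<Sum>i<n. \<Sum>j<n. E a i a j (E b j b i f) T)"

lemma Hop_alt: "Hop k n \<alpha> z a f T = (\<Sum>i<n. \<alpha> i * E a i a i f T)
    + (\<Sum>b\<in>{..<k} - {a}. 1 / (z a - z b) * W1 n a b f T)"
  unfolding Hop_def W1_def by (rule refl)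

lemma lin_W1: "lin (W1 n a b)"
proof -
  have e: "W1 n a b = (\<lambda>f T. \<Sum>i\<in>{..<n}. \<Sum>j\<in>{..<n}. EE (a, i) (a, j) (EE (b, j) (b, i) f) T)"
    unfolding W1_def E_EE by (rule refl)
  have "lin (\<lambda>f T. \<Sum>i\<in>{..<n}. \<Sum>j\<in>{..<n}. EE (a, i) (a, j) (EE (b, j) (b, i) f) T)"
  proof (rule lin_sum)
    fix i
    show "lin (\<lambda>f T. \<Sum>j\<in>{..<n}. EE (a, i) (a, j) (EE (b, j) (b, i) f) T)"
    proof (rule lin_sum)
      fix j
      show "lin (\<lambda>f. EE (a, i) (a, j) (EE (b, j) (b, i) f))" by (rule lin_comp[OF lin_EE lin_EE])
    qed
  qed
  then show ?thesis unfolding e .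
qed

lemma W1_sym:
  assumes "a \<noteq> b" "\<And>S. infinite S \<Longrightarrow> v S = 0"
  shows "W1 n a b v T = W1 n b a v T"
proof -
  have "W1 n b a v T = (\<Sum>i<n. \<Sum>j<n. EE (a, j) (a, i) (EE (b, i) (b, j) v) T)"
    unfolding W1_def E_EE
    by (intro sum.cong refl) (rule EE_comm; use assms in auto)
  also have "\<dots> = W1 n a b v T" unfolding W1_def E_EE by (rule sum.swap)
  finally show ?thesis by simp
qed

definition Op1 :: "nat \<Rightarrow> nat \<Rightarrow> grass \<Rightarrow> grass" where
  "Op1 n k f = (\<lambda>T. 1 / 2 * (\<Sum>a<k. \<Sum>b\<in>{..<k} - {a}. W1 n a b f T))"

lemma lin_Op1: "lin (Op1 n k)"
proof -
  have "lin (\<lambda>f T. \<Sum>a\<in>{..<k}. \<Sum>b\<in>{..<k} - {a}. W1 n a b f T)"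
  proof (rule lin_sum)
    fix a show "lin (\<lambda>f T. \<Sum>b\<in>{..<k} - {a}. W1 n a b f T)"
      by (rule lin_sum) (rule lin_W1)
  qed
  then have "lin (\<lambda>f T. 1 / 2 * (\<Sum>a\<in>{..<k}. \<Sum>b\<in>{..<k} - {a}. W1 n a b f T))"
    by (rule lin_scale)
  then show ?thesis unfolding Op1_def .
qed

definition C1 :: "nat \<Rightarrow> nat \<Rightarrow> (nat \<times> nat) set \<Rightarrow> (nat \<times> nat) set \<Rightarrow> complex" where
  "C1 k n T S = Op1 n k (\<lambda>T. if T = S then 1 else 0) T"

lemma Hop_hom: "Hop k n \<alpha> z a (\<lambda>T. c * f T) = (\<lambda>T. c * Hop k n \<alpha> z a f T)"
  unfolding Hop_def E_EE
  by (simp add: EE_hom sum_distrib_left distrib_left mult_ac)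

lemma diag_sum:
  fixes D :: "(nat \<times> nat) set \<Rightarrow> complex" and C :: "(nat \<times> nat) set \<Rightarrow> (nat \<times> nat) set \<Rightarrow> complex"
    and v :: grass
  assumes "T \<in> B" "finite B"
  shows "(\<Sum>S\<in>B. ((if T = S then D S else 0) + C T S) * v S) = D T * v T + (\<Sum>S\<in>B. C T S * v S)"
proof -
  have "(\<Sum>S\<in>B. (if T = S then D S else 0) * v S) = (\<Sum>S\<in>B. if T = S then D T * v T else 0)"
    by (rule sum.cong) auto
  also have "\<dots> = D T * v T" using assms by simp
  finally show ?thesis by (simp add: distrib_right sum.distrib)
qed

lemma ring_aux: "(x::complex) * (d * w) + y * (- d * w) = (x - y) * d * w"
  by (simp add: algebra_simps)

lemma eig1:
  assumes inj: "inj_on z {..<k}" and v: "v \<in> Pweight k n l m"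
    and h: "\<forall>a\<in>{..<k}. Hop k n \<alpha> z a v = (\<lambda>T. \<mu> a * v T)" and T: "T \<in> Bset k n l m"
  shows "(\<Sum>S\<in>Bset k n l m. ((if T = S then dd k n S \<alpha> z else 0) + C1 k n T S) * v S)
       = (\<Sum>a<k. z a * \<mu> a) * v T"
proof -
  have supp: "\<forall>S. v S \<noteq> 0 \<longrightarrow> S \<in> Bset k n l m" using v Pweight_eq by blast
  have inf: "\<And>S. infinite S \<Longrightarrow> v S = 0" using V_inf[OF v] by blast
  have hT: "Hop k n \<alpha> z a v T = \<mu> a * v T" if "a < k" for a
    using h that by (metis lessThan_iff)
  have "(\<Sum>a<k. z a * \<mu> a) * v T = (\<Sum>a<k. z a * Hop k n \<alpha> z a v T)"
    unfolding sum_distrib_right by (intro sum.cong refl) (simp add: hT)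
  also have "\<dots> = (\<Sum>a<k. z a * (\<Sum>i<n. \<alpha> i * E a i a i v T))
      + (\<Sum>a<k. \<Sum>b\<in>{..<k} - {a}. z a * (1 / (z a - z b) * W1 n a b v T))"
    by (simp add: Hop_alt distrib_left sum.distrib sum_distrib_left)
  also have "(\<Sum>a<k. z a * (\<Sum>i<n. \<alpha> i * E a i a i v T)) = dd k n T \<alpha> z * v T"
    unfolding dd_def E_EE EE_diag sum_distrib_left sum_distrib_right
    by (intro sum.cong refl) auto
  also have "(\<Sum>a<k. \<Sum>b\<in>{..<k} - {a}. z a * (1 / (z a - z b) * W1 n a b v T))
      = 1 / 2 * (\<Sum>a<k. \<Sum>b\<in>{..<k} - {a}. W1 n a b v T)"
  proof (rule pairing)
    fix a b assume ab: "a < k" "b < k" "a \<noteq> b"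
    then have zz: "z a - z b \<noteq> 0" using inj by (auto dest: inj_onD)
    have "W1 n b a v T = W1 n a b v T" using W1_sym[OF ab(3) inf] by simp
    moreover have q: "1 / (z b - z a) = - (1 / (z a - z b))"
      by (metis minus_diff_eq divide_minus_right)
    ultimately have "z a * (1 / (z a - z b) * W1 n a b v T) + z b * (1 / (z b - z a) * W1 n b a v T)
        = z a * (1 / (z a - z b) * W1 n a b v T) + z b * (- (1 / (z a - z b)) * W1 n a b v T)"
      by simp
    also have "\<dots> = (z a - z b) * (1 / (z a - z b)) * W1 n a b v T" by (rule ring_aux)
    also have "\<dots> = 1 * W1 n a b v T" using zz by simp
    finally show "z a * (1 / (z a - z b) * W1 n a b v T) + z b * (1 / (z b - z a) * W1 n b a v T) = 1 * W1 n a b v T" .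
  qed
  also have "1 / 2 * (\<Sum>a<k. \<Sum>b\<in>{..<k} - {a}. W1 n a b v T) = Op1 n k v T"
    by (simp add: Op1_def)
  also have "\<dots> = (\<Sum>S\<in>Bset k n l m. v S * C1 k n T S)"
    unfolding C1_def by (rule lin_apply[OF lin_Op1 Bset_fin supp])
  finally show ?thesis
    using diag_sum[OF T Bset_fin, of "\<lambda>S. dd k n S \<alpha> z" "C1 k n" v] by (simp add: mult_ac)
qed

definition W2 :: "nat \<Rightarrow> nat \<Rightarrow> nat \<Rightarrow> grass \<Rightarrow> grass" where
  "W2 k i j f = (\<lambda>T. \<Sum>a<k. \<Sum>b<k. E a i b i (E b j a j f) T)"

lemma Hop'_alt: "Hop' k n \<alpha> z i f T = (\<Sum>a<k. z a * E a i a i f T)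
    + (\<Sum>j\<in>{..<n} - {i}. 1 / (\<alpha> j - \<alpha> i) * W2 k i j f T)"
  unfolding Hop'_def W2_def by (rule refl)

lemma lin_W2: "lin (W2 k i j)"
proof -
  have e: "W2 k i j = (\<lambda>f T. \<Sum>a\<in>{..<k}. \<Sum>b\<in>{..<k}. EE (a, i) (b, i) (EE (b, j) (a, j) f) T)"
    unfolding W2_def E_EE by (rule refl)
  have "lin (\<lambda>f T. \<Sum>a\<in>{..<k}. \<Sum>b\<in>{..<k}. EE (a, i) (b, i) (EE (b, j) (a, j) f) T)"
  proof (rule lin_sum)
    fix a
    show "lin (\<lambda>f T. \<Sum>b\<in>{..<k}. EE (a, i) (b, i) (EE (b, j) (a, j) f) T)"
    proof (rule lin_sum)
      fix b
      show "lin (\<lambda>f. EE (a, i) (b, i) (EE (b, j) (a, j) f))" by (rule lin_comp[OF lin_EE lin_EE])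
    qed
  qed
  then show ?thesis unfolding e .
qed

lemma W2_sym:
  assumes "i \<noteq> j" "\<And>S. infinite S \<Longrightarrow> v S = 0"
  shows "W2 k i j v T = W2 k j i v T"
proof -
  have "W2 k j i v T = (\<Sum>a<k. \<Sum>b<k. EE (b, i) (a, i) (EE (a, j) (b, j) v) T)"
    unfolding W2_def E_EE
    by (intro sum.cong refl) (rule EE_comm; use assms in auto)
  also have "\<dots> = W2 k i j v T" unfolding W2_def E_EE by (rule sum.swap)
  finally show ?thesis by simp
qed

definition Op2 :: "nat \<Rightarrow> nat \<Rightarrow> grass \<Rightarrow> grass" where
  "Op2 n k f = (\<lambda>T. (- 1) / 2 * (\<Sum>i<n. \<Sum>j\<in>{..<n} - {i}. W2 k i j f T))"

lemma lin_Op2: "lin (Op2 n k)"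
proof -
  have "lin (\<lambda>f T. \<Sum>i\<in>{..<n}. \<Sum>j\<in>{..<n} - {i}. W2 k i j f T)"
  proof (rule lin_sum)
    fix i show "lin (\<lambda>f T. \<Sum>j\<in>{..<n} - {i}. W2 k i j f T)"
      by (rule lin_sum) (rule lin_W2)
  qed
  then have "lin (\<lambda>f T. (- 1) / 2 * (\<Sum>i\<in>{..<n}. \<Sum>j\<in>{..<n} - {i}. W2 k i j f T))"
    by (rule lin_scale)
  then show ?thesis unfolding Op2_def .
qed

definition C2 :: "nat \<Rightarrow> nat \<Rightarrow> (nat \<times> nat) set \<Rightarrow> (nat \<times> nat) set \<Rightarrow> complex" where
  "C2 k n T S = Op2 n k (\<lambda>T. if T = S then 1 else 0) T"

lemma Hop'_hom: "Hop' k n \<alpha> z i (\<lambda>T. c * f T) = (\<lambda>T. c * Hop' k n \<alpha> z i f T)"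
  unfolding Hop'_def E_EE
  by (simp add: EE_hom sum_distrib_left distrib_left mult_ac)

lemma eig2:
  assumes inj: "inj_on \<alpha> {..<n}" and v: "v \<in> Pweight k n l m"
    and h: "\<forall>i\<in>{..<n}. Hop' k n \<alpha> z i v = (\<lambda>T. \<mu> i * v T)" and T: "T \<in> Bset k n l m"
  shows "(\<Sum>S\<in>Bset k n l m. ((if T = S then dd k n S \<alpha> z else 0) + C2 k n T S) * v S)
       = (\<Sum>i<n. \<alpha> i * \<mu> i) * v T"
proof -
  have supp: "\<forall>S. v S \<noteq> 0 \<longrightarrow> S \<in> Bset k n l m" using v Pweight_eq by blast
  have inf: "\<And>S. infinite S \<Longrightarrow> v S = 0" using V_inf[OF v] by blast
  have hT: "Hop' k n \<alpha> z i v T = \<mu> i * v T" if "i < n" for i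
    using h that by (metis lessThan_iff)
  have "(\<Sum>i<n. \<alpha> i * \<mu> i) * v T = (\<Sum>i<n. \<alpha> i * Hop' k n \<alpha> z i v T)"
    unfolding sum_distrib_right by (intro sum.cong refl) (simp add: hT)
  also have "\<dots> = (\<Sum>i<n. \<alpha> i * (\<Sum>a<k. z a * E a i a i v T))
      + (\<Sum>i<n. \<Sum>j\<in>{..<n} - {i}. \<alpha> i * (1 / (\<alpha> j - \<alpha> i) * W2 k i j v T))"
    by (simp add: Hop'_alt distrib_left sum.distrib sum_distrib_left)
  also have "(\<Sum>i<n. \<alpha> i * (\<Sum>a<k. z a * E a i a i v T))
      = (\<Sum>i<n. \<Sum>a<k. (if (a, i) \<in> T then z a * \<alpha> i else 0) * v T)"
    unfolding E_EE EE_diag sum_distrib_left by (intro sum.cong refl) auto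
  also have "\<dots> = dd k n T \<alpha> z * v T"
    unfolding dd_def sum_distrib_right by (rule sum.swap)
  also have "(\<Sum>i<n. \<Sum>j\<in>{..<n} - {i}. \<alpha> i * (1 / (\<alpha> j - \<alpha> i) * W2 k i j v T))
      = (- 1) / 2 * (\<Sum>i<n. \<Sum>j\<in>{..<n} - {i}. W2 k i j v T)"
  proof (rule pairing)
    fix i j assume ij: "i < n" "j < n" "i \<noteq> j"
    then have aa: "\<alpha> j - \<alpha> i \<noteq> 0" using inj by (auto dest: inj_onD)
    have "W2 k j i v T = W2 k i j v T" using W2_sym[OF ij(3) inf] by simp
    moreover have q: "1 / (\<alpha> i - \<alpha> j) = - (1 / (\<alpha> j - \<alpha> i))"
      by (metis minus_diff_eq divide_minus_right)
    ultimately have "\<alpha> i * (1 / (\<alpha> j - \<alpha> i) * W2 k i j v T) + \<alpha> j * (1 / (\<alpha> i - \<alpha> j) * W2 k j i v T)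
        = \<alpha> i * (1 / (\<alpha> j - \<alpha> i) * W2 k i j v T) + \<alpha> j * (- (1 / (\<alpha> j - \<alpha> i)) * W2 k i j v T)"
      by simp
    also have "\<dots> = (\<alpha> i - \<alpha> j) * (1 / (\<alpha> j - \<alpha> i)) * W2 k i j v T" by (rule ring_aux)
    also have "(\<alpha> i - \<alpha> j) * (1 / (\<alpha> j - \<alpha> i)) * W2 k i j v T = (- 1) * W2 k i j v T"
    proof -
      have mi: "(\<alpha> i - \<alpha> j) = - (\<alpha> j - \<alpha> i)" by simp
      have one: "(\<alpha> j - \<alpha> i) * (1 / (\<alpha> j - \<alpha> i)) = 1" using aa by simp
      show ?thesis by (simp only: mi mult_minus_left one)
    qed
    finally show "\<alpha> i * (1 / (\<alpha> j - \<alpha> i) * W2 k i j v T) + \<alpha> j * (1 / (\<alpha> i - \<alpha> j) * W2 k j i v T)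
        = (- 1) * W2 k i j v T" .
  qed
  also have "(- 1) / 2 * (\<Sum>i<n. \<Sum>j\<in>{..<n} - {i}. W2 k i j v T) = Op2 n k v T"
    by (simp add: Op2_def)
  also have "\<dots> = (\<Sum>S\<in>Bset k n l m. v S * C2 k n T S)"
    unfolding C2_def by (rule lin_apply[OF lin_Op2 Bset_fin supp])
  finally show ?thesis
    using diag_sum[OF T Bset_fin, of "\<lambda>S. dd k n S \<alpha> z" "C2 k n" v] by (simp add: mult_ac)
qed

theorem lemma5p6:
  fixes k n :: nat and l m :: "nat \<Rightarrow> nat"
  assumes "Zkn k n l m"
  shows "generic n k (\<lambda>\<alpha> z.
           common_eigenspaces_one_dim {..<k} (Hop k n \<alpha> z) (Pweight k n l m))
       \<and> generic n k (\<lambda>\<alpha> z.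
           common_eigenspaces_one_dim {..<n} (Hop' k n \<alpha> z) (Pweight k n l m))"
proof
  have e1: "(\<Sum>S\<in>Bset k n l m. ((if T = S then dd k n S \<alpha> z else 0) + C1 k n T S) * v S)
       = (\<lambda>\<alpha> z \<mu>. \<Sum>a<k. z a * \<mu> a) \<alpha> z \<mu> * v T"
    if "inj_on \<alpha> {..<n}" "inj_on z {..<k}" "v \<in> Pweight k n l m"
      "\<forall>a\<in>{..<k}. Hop k n \<alpha> z a v = (\<lambda>T. \<mu> a * v T)" "T \<in> Bset k n l m" for \<alpha> z v \<mu> T
    using eig1[OF that(2,3,4,5)] by simp
  show "generic n k (\<lambda>\<alpha> z. common_eigenspaces_one_dim {..<k} (Hop k n \<alpha> z) (Pweight k n l m))"
    by (rule core[where H="\<lambda>\<alpha> z. Hop k n \<alpha> z", OF Bset_fin Pweight_eq Hop_hom e1 dd_poly dd_scale dd_inj])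
next
  have e2: "(\<Sum>S\<in>Bset k n l m. ((if T = S then dd k n S \<alpha> z else 0) + C2 k n T S) * v S)
       = (\<lambda>\<alpha> z \<mu>. \<Sum>i<n. \<alpha> i * \<mu> i) \<alpha> z \<mu> * v T"
    if "inj_on \<alpha> {..<n}" "inj_on z {..<k}" "v \<in> Pweight k n l m"
      "\<forall>i\<in>{..<n}. Hop' k n \<alpha> z i v = (\<lambda>T. \<mu> i * v T)" "T \<in> Bset k n l m" for \<alpha> z v \<mu> T
    using eig2[OF that(1,3,4,5)] by simp
  show "generic n k (\<lambda>\<alpha> z. common_eigenspaces_one_dim {..<n} (Hop' k n \<alpha> z) (Pweight k n l m))"
    by (rule core[where H="\<lambda>\<alpha> z. Hop' k n \<alpha> z", OF Bset_fin Pweight_eq Hop'_hom e2 dd_poly dd_scale dd_inj])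
qed

end
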